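(* Let $r>0$. For $h>0$ let $R_h$ be the two-dimensional hyperbolic complete orthoscheme, in the projective disc model $\mathbb{D}$, with vertices $P_0=(r,0)$, $P_1=(0,0)$, $P_2=(0,h)$, and let $A(h)$ be its hyperbolic area. Then: (1) If $r<1$, the area $A(h)$ attains its maximum over $h>0$ only at $h=1$, and the maximal area is $\pi/2-\alpha_1$, where $\alpha_1$ is the hyperbolic angle of $R_1$ at $P_0$. (2) If $r=1$, the area $A(h)$ attains its maximum at every $h\in[1,+\infty)$, and the maximal area is $\pi/2$. (3) If $r>1$, the area $A(h)$ attains its maximum at every $h\in[1, r/\sqrt{r^2-1}]$, and the maximal area is $\pi/2$.
   Context: The projective disc (Beltrami–Klein) model $\mathbb{D}$ of the hyperbolic plane is the open unit disc in $\mathbb{R}^2$, with hyperbolic lines the intersections of Euclidean lines with $\mathbb{D}$. Points on $\partial\mathbb{D}$ are ideal, points outside the closed disc ultraideal. An ultraideal point $v$ has a polar line: the hyperbolic line joining the two tangency points on $\partial\mathbb{D}$ of the tangent lines from $v$. Truncation of a Euclidean triangle at an ultraideal vertex $v$ means intersecting it with the closed half-plane bounded by the polar line of $v$ not containing $v$. The complete orthoscheme $R_h$ is the right-angled (at $P_1$) triangle $P_0P_1P_2$ intersected with $\mathbb{D}$, truncated at each of $P_0,P_2$ that is ultraideal; when both $P_0$ and $P_2$ are ultraideal and their polar lines intersect in $\mathbb{D}$, $R_h$ is the quadrilateral bounded by the edges $P_0P_1$, $P_1P_2$ and the two polar lines. *)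

theory Defs
  imports "HOL-Analysis.Analysis"
begin

text \<open>Projective (Beltrami--Klein) disc model; points are pairs of reals.\<close>

definition klein_disc :: "(real \<times> real) set" where
  "klein_disc = ball 0 1"

definition ultraideal :: "real \<times> real \<Rightarrow> bool" where
  "ultraideal v \<longleftrightarrow> norm v > 1"

text \<open>The polar line of an ultraideal point v is the line x . v = 1 (it passes through the
  two tangency points); the closed half-plane bounded by it not containing v is x . v \<le> 1.\<close>

definition polar_halfplane :: "real \<times> real \<Rightarrow> (real \<times> real) set" where
  "polar_halfplane v = {x. inner x v \<le> 1}"

definition truncate_at :: "real \<times> real \<Rightarrow> (real \<times> real) set \<Rightarrow> (real \<times> real) set" where
  "truncate_at v S = (if ultraideal v then S \<inter> polar_halfplane v else S)"

definition orthoscheme :: "real \<Rightarrow> real \<Rightarrow> (real \<times> real) set" where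
  "orthoscheme r h =
     truncate_at (0, h) (truncate_at (r, 0) (convex hull {(r,0), (0,0), (0,h)} \<inter> klein_disc))"

definition klein_area_density :: "real \<times> real \<Rightarrow> real" where
  "klein_area_density x = 1 / (1 - (norm x)\<^sup>2) powr (3/2)"

definition hyp_area :: "(real \<times> real) set \<Rightarrow> ennreal" where
  "hyp_area S = (\<integral>\<^sup>+ x. indicator (S \<inter> klein_disc) x * ennreal (klein_area_density x) \<partial>lborel)"

definition klein_metric :: "real \<times> real \<Rightarrow> real \<times> real \<Rightarrow> real \<times> real \<Rightarrow> real" where
  "klein_metric p u v =
     inner u v / (1 - (norm p)\<^sup>2) + inner p u * inner p v / (1 - (norm p)\<^sup>2)\<^sup>2"

definition klein_angle :: "real \<times> real \<Rightarrow> real \<times> real \<Rightarrow> real \<times> real \<Rightarrow> real" where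
  "klein_angle p u v =
     arccos (klein_metric p u v / sqrt (klein_metric p u u * klein_metric p v v))"

definition vertex_angle :: "real \<times> real \<Rightarrow> real \<times> real \<Rightarrow> real \<times> real \<Rightarrow> real" where
  "vertex_angle a b c = klein_angle a (b - a) (c - a)"

end

theory Submission
  imports Defs
begin


lemma nn_FTC_open:
  fixes F f :: "real \<Rightarrow> real" and a b A B :: real
  assumes "a < b"
  assumes F: "\<And>x. a < x \<Longrightarrow> x < b \<Longrightarrow> DERIV F x :> f x"
  assumes f: "\<And>x. a < x \<Longrightarrow> x < b \<Longrightarrow> isCont f x"
  assumes nn: "\<And>x. a < x \<Longrightarrow> x < b \<Longrightarrow> 0 \<le> f x"
  assumes LA: "(F \<longlongrightarrow> A) (at_right a)"
  assumes LB: "(F \<longlongrightarrow> B) (at_left b)"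
  shows "(\<integral>\<^sup>+y. indicator {a<..<b} y * ennreal (f y) \<partial>lborel) = ennreal (B - A)"
proof -
  have *: "set_integrable lborel (einterval (ereal a) (ereal b)) f" "(LBINT x=ereal a..ereal b. f x) = B - A"
    by (rule interval_integral_FTC_nonneg[where F=F]; (use assms in \<open>auto simp: ereal_tendsto_simps1\<close>))+
  have i: "set_integrable lborel {a<..<b} f" using *(1) by simp
  have "(LBINT x=ereal a..ereal b. f x) = (LBINT x:{a<..<b}. f x)"
    using \<open>a<b\<close> by (simp add: interval_lebesgue_integral_def)
  hence v: "(LBINT x:{a<..<b}. f x) = B - A" using *(2) by simp
  have "(\<integral>\<^sup>+y. indicator {a<..<b} y * ennreal (f y) \<partial>lborel) = (\<integral>\<^sup>+y. ennreal (indicator {a<..<b} y * f y) \<partial>lborel)"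
    by (intro nn_integral_cong) (auto split: split_indicator)
  also have "\<dots> = ennreal (\<integral>y. indicator {a<..<b} y * f y \<partial>lborel)"
    apply (rule nn_integral_eq_integral)
    using i apply (simp add: set_integrable_def)
    using nn by (auto split: split_indicator)
  also have "(\<integral>y. indicator {a<..<b} y * f y \<partial>lborel) = B - A"
    using v by (simp add: set_lebesgue_integral_def)
  finally show ?thesis .
qed



lemma powr32: "(t::real) > 0 \<Longrightarrow> t powr (3/2) = t * sqrt t"
proof -
  assume t: "t > 0"
  have "t powr (3/2) = t powr (1 + 1/2)" by simp
  also have "\<dots> = t powr 1 * t powr (1/2)" by (rule powr_add)
  also have "\<dots> = t * sqrt t" using t by (simp add: powr_half_sqrt)
  finally show ?thesis .
qed

lemma dens_eq: "x\<^sup>2 + y\<^sup>2 < 1 \<Longrightarrow> klein_area_density (x,y) = 1 / ((1 - y\<^sup>2 - x\<^sup>2) * sqrt (1 - y\<^sup>2 - x\<^sup>2))"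
  unfolding klein_area_density_def
  by (subst powr32) (auto simp: norm_Pair algebra_simps)

lemma dens_meas[measurable]: "klein_area_density \<in> borel_measurable borel"
  unfolding klein_area_density_def by measurable

lemma sqrt_deriv:
  assumes "g x > 0" "(g has_real_derivative g') (at x)"
  shows "((\<lambda>x. sqrt (g x)) has_real_derivative g' / (2 * sqrt (g x))) (at x)"
  using DERIV_chain2[OF DERIV_real_sqrt[OF assms(1)] assms(2)] by (simp add: field_simps)

lemma inner_deriv:
  assumes "x\<^sup>2 + y\<^sup>2 < (1::real)"
  shows "((\<lambda>x. x / ((1 - y\<^sup>2) * sqrt (1 - y\<^sup>2 - x\<^sup>2))) has_real_derivative
     1 / ((1 - y\<^sup>2 - x\<^sup>2) * sqrt (1 - y\<^sup>2 - x\<^sup>2))) (at x)"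
proof -
  define a where "a = 1 - y\<^sup>2"
  have t: "a - x\<^sup>2 > 0" using assms unfolding a_def by simp
  have a: "a > 0" using t by (smt (verit) zero_le_power2)
  have s: "sqrt (a - x\<^sup>2) > 0" using t by simp
  have g: "((\<lambda>x. a - x\<^sup>2) has_real_derivative (- 2 * x)) (at x)"
    by (auto intro!: derivative_eq_intros)
  have ds: "((\<lambda>x. sqrt (a - x\<^sup>2)) has_real_derivative (- 2 * x) / (2 * sqrt (a - x\<^sup>2))) (at x)"
    by (rule sqrt_deriv[OF t g])
  have "((\<lambda>x. x / (a * sqrt (a - x\<^sup>2))) has_real_derivative
     (1 * (a * sqrt (a - x\<^sup>2)) - x * (a * ((- 2 * x) / (2 * sqrt (a - x\<^sup>2))))) / (a * sqrt (a - x\<^sup>2) * (a * sqrt (a - x\<^sup>2)))) (at x)"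
    by (rule DERIV_divide DERIV_ident DERIV_cmult ds)+ (use a s in simp)
  moreover have "(1 * (a * sqrt (a - x\<^sup>2)) - x * (a * ((- 2 * x) / (2 * sqrt (a - x\<^sup>2))))) / (a * sqrt (a - x\<^sup>2) * (a * sqrt (a - x\<^sup>2)))
     = 1 / ((a - x\<^sup>2) * sqrt (a - x\<^sup>2))"
    using t a s by (simp add: field_simps power2_eq_square)
  ultimately show ?thesis unfolding a_def by simp
qed



lemma inv_aux: "(s::real) > 0 \<Longrightarrow> inverse (1 + (w / s)\<^sup>2) = (s * s) / (s * s + w\<^sup>2)"
proof -
  assume s: "s > 0"
  have ne: "s * s + w\<^sup>2 > 0" using s by (intro add_pos_nonneg) auto
  have "1 + (w / s)\<^sup>2 = (s * s + w\<^sup>2) / (s * s)" using s by (simp add: field_simps power2_eq_square)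
  then show ?thesis using ne s by simp
qed

lemma frac_aux: "(a::real) > 0 \<Longrightarrow> s > 0 \<Longrightarrow> a / (a + W) * (N / (s * a)) = N / (s * (a + W))"
  by (simp add: field_simps)

lemma outer_deriv:
  fixes p q y :: real
  defines "D \<equiv> \<lambda>y. 1 - y\<^sup>2 - (p - q*y)\<^sup>2"
  assumes pos: "D y > 0"
  shows "((\<lambda>y. arctan ((p*y - q) / sqrt (D y))) has_real_derivative
     (p - q*y) / ((1 - y\<^sup>2) * sqrt (D y))) (at y)"
proof -
  define k where "k = - y + q*(p - q*y)"
  have g: "(D has_real_derivative (2 * k)) (at y)"
    unfolding D_def k_def by (auto intro!: derivative_eq_intros simp: algebra_simps)
  have ds: "((\<lambda>y. sqrt (D y)) has_real_derivative k / sqrt (D y)) (at y)"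
    using sqrt_deriv[OF pos g] by simp
  define s where "s = sqrt (D y)"
  have s: "s > 0" "s * s = D y" using pos unfolding s_def by auto
  have u: "((\<lambda>y. (p*y - q) / sqrt (D y)) has_real_derivative
     (p * s - (p*y - q) * (k / s)) / (s * s)) (at y)"
    unfolding s_def
    apply (rule DERIV_divide[OF _ ds, THEN DERIV_cong])
      apply (auto intro!: derivative_eq_intros)
    using pos by simp
  have a: "((\<lambda>y. arctan ((p*y - q) / sqrt (D y))) has_real_derivative
      inverse (1 + ((p*y - q) / s)\<^sup>2) * ((p * s - (p*y - q) * (k / s)) / (s * s))) (at y)"
    using DERIV_chain2[OF DERIV_arctan u] unfolding s_def .
  have 1: "1 - y\<^sup>2 > 0" using pos unfolding D_def by (smt (verit) zero_le_power2)
  have key: "(p * (s * s) - (p*y - q) * k) * (1 - y\<^sup>2) = (p - q*y) * (s * s + (p*y - q)\<^sup>2)"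
  proof -
    have e: "s * s = 1 - y\<^sup>2 - (p - q*y)\<^sup>2" using s(2) unfolding D_def by simp
    have "(p * (1 - y\<^sup>2 - (p - q*y)\<^sup>2) - (p*y - q) * k) * (1 - y\<^sup>2) = (p - q*y) * ((1 - y\<^sup>2 - (p - q*y)\<^sup>2) + (p*y - q)\<^sup>2)"
      unfolding k_def by (simp add: algebra_simps power2_eq_square)
    then show ?thesis unfolding e .
  qed
  have ne: "s * s + (p*y - q)\<^sup>2 > 0" using s(1) by (intro add_pos_nonneg) auto
  have i1: "inverse (1 + ((p*y - q) / s)\<^sup>2) = (s * s) / (s * s + (p*y - q)\<^sup>2)"
    using s(1) by (rule inv_aux)
  have i2: "(p * s - (p*y - q) * (k / s)) / (s * s) = (p * (s * s) - (p*y - q) * k) / (s * (s * s))"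
    using s(1) by (simp add: field_simps)
  have "inverse (1 + ((p*y - q) / s)\<^sup>2) * ((p * s - (p*y - q) * (k / s)) / (s * s))
     = (p * (s * s) - (p*y - q) * k) / (s * (s * s + (p*y - q)\<^sup>2))"
    unfolding i1 i2 using s(1) by (intro frac_aux) auto
  also have "\<dots> = (p - q*y) / ((1 - y\<^sup>2) * s)"
    using s(1) ne 1 key by (simp add: divide_simps) 
  finally have "inverse (1 + ((p*y - q) / s)\<^sup>2) * ((p * s - (p*y - q) * (k / s)) / (s * s)) = (p - q*y) / ((1 - y\<^sup>2) * s)" .
  then show ?thesis using a unfolding s_def by simp
qed



lemma inner_int:
  fixes X y :: real
  assumes "0 \<le> X" "X\<^sup>2 + y\<^sup>2 < 1"
  shows "(\<integral>\<^sup>+x. indicator {0..X} x * ennreal (klein_area_density (x,y)) \<partial>lborel)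
       = ennreal (X / ((1 - y\<^sup>2) * sqrt (1 - y\<^sup>2 - X\<^sup>2)))"
proof -
  have lt: "x\<^sup>2 + y\<^sup>2 < 1" if "x \<in> {0..X}" for x
  proof -
    have "x\<^sup>2 \<le> X\<^sup>2" using that by (auto intro!: power_mono)
    then show ?thesis using assms by simp
  qed
  have "(\<integral>\<^sup>+x. ennreal (klein_area_density (x,y)) * indicator {0..X} x \<partial>lborel)
     = ennreal ((\<lambda>x. x / ((1 - y\<^sup>2) * sqrt (1 - y\<^sup>2 - x\<^sup>2))) X - (\<lambda>x. x / ((1 - y\<^sup>2) * sqrt (1 - y\<^sup>2 - x\<^sup>2))) 0)"
  proof (rule nn_integral_FTC_Icc)
    show "(\<lambda>x. klein_area_density (x, y)) \<in> borel_measurable borel" by measurable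
    fix x assume x: "x \<in> {0..X}"
    show "((\<lambda>x. x / ((1 - y\<^sup>2) * sqrt (1 - y\<^sup>2 - x\<^sup>2))) has_real_derivative klein_area_density (x, y)) (at x)"
      using inner_deriv[OF lt[OF x]] dens_eq[OF lt[OF x]] by simp
    have "1 - y\<^sup>2 - x\<^sup>2 > 0" using lt[OF x] by simp
    then show "0 \<le> klein_area_density (x, y)" using dens_eq[OF lt[OF x]] by simp
  qed (use assms in auto)
  then show ?thesis by (simp add: mult.commute)
qed

lemma area_slices:
  fixes S :: "(real \<times> real) set" and a b :: real and Xf :: "real \<Rightarrow> real"
  assumes S[measurable]: "S \<in> sets borel"
  assumes slice: "\<And>x y. a < y \<Longrightarrow> y < b \<Longrightarrow> (x,y) \<in> S \<longleftrightarrow> 0 \<le> x \<and> x \<le> Xf y"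
  assumes out: "\<And>x y. (x,y) \<in> S \<Longrightarrow> a \<le> y \<and> y \<le> b"
  assumes X: "\<And>y. a < y \<Longrightarrow> y < b \<Longrightarrow> 0 \<le> Xf y \<and> (Xf y)\<^sup>2 + y\<^sup>2 < 1"
  shows "(\<integral>\<^sup>+z. indicator S z * ennreal (klein_area_density z) \<partial>lborel)
    = (\<integral>\<^sup>+y. indicator {a<..<b} y * ennreal (Xf y / ((1 - y\<^sup>2) * sqrt (1 - y\<^sup>2 - (Xf y)\<^sup>2))) \<partial>lborel)"
proof -
  have m: "(\<lambda>z. indicator S z * ennreal (klein_area_density z)) \<in> borel_measurable (lborel \<Otimes>\<^sub>M lborel)"
    unfolding lborel_prod by measurable
  have "(\<integral>\<^sup>+z. indicator S z * ennreal (klein_area_density z) \<partial>lborel)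
     = (\<integral>\<^sup>+z. indicator S z * ennreal (klein_area_density z) \<partial>(lborel \<Otimes>\<^sub>M lborel))"
    by (simp only: lborel_prod)
  also have "\<dots> = (\<integral>\<^sup>+y. \<integral>\<^sup>+x. indicator S (x,y) * ennreal (klein_area_density (x,y)) \<partial>lborel \<partial>lborel)"
    by (rule lborel_pair.nn_integral_snd[OF m, symmetric])
  also have "\<dots> = (\<integral>\<^sup>+y. indicator {a<..<b} y * ennreal (Xf y / ((1 - y\<^sup>2) * sqrt (1 - y\<^sup>2 - (Xf y)\<^sup>2))) \<partial>lborel)"
  proof (rule nn_integral_cong_AE)
    have "AE y in lborel. y \<noteq> a" "AE y in lborel. y \<noteq> b" by (rule AE_lborel_singleton)+
    then show "AE y in lborel. (\<integral>\<^sup>+x. indicator S (x,y) * ennreal (klein_area_density (x,y)) \<partial>lborel)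
        = indicator {a<..<b} y * ennreal (Xf y / ((1 - y\<^sup>2) * sqrt (1 - y\<^sup>2 - (Xf y)\<^sup>2)))"
    proof eventually_elim
      case (elim y)
      show ?case
      proof (cases "a < y \<and> y < b")
        case True
        have "(\<integral>\<^sup>+x. indicator S (x,y) * ennreal (klein_area_density (x,y)) \<partial>lborel)
            = (\<integral>\<^sup>+x. indicator {0..Xf y} x * ennreal (klein_area_density (x,y)) \<partial>lborel)"
          using slice[of y] True by (intro nn_integral_cong) (auto split: split_indicator)
        also have "\<dots> = ennreal (Xf y / ((1 - y\<^sup>2) * sqrt (1 - y\<^sup>2 - (Xf y)\<^sup>2)))"
          using X[of y] True by (intro inner_int) auto
        finally show ?thesis using True by simp
      next
        case False
        then have "\<And>x. (x,y) \<notin> S" using out elim by fastforce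
        then show ?thesis using False by (simp add: indicator_def)
      qed
    qed
  qed
  finally show ?thesis .
qed



lemma piece:
  fixes p q a b A B :: real
  defines "D \<equiv> \<lambda>y. 1 - y\<^sup>2 - (p - q*y)\<^sup>2"
  assumes "a < b"
  assumes Dpos: "\<And>y. a < y \<Longrightarrow> y < b \<Longrightarrow> D y > 0"
  assumes Xnn: "\<And>y. a < y \<Longrightarrow> y < b \<Longrightarrow> p - q*y \<ge> 0"
  assumes LA: "((\<lambda>y. arctan ((p*y - q) / sqrt (D y))) \<longlongrightarrow> A) (at_right a)"
  assumes LB: "((\<lambda>y. arctan ((p*y - q) / sqrt (D y))) \<longlongrightarrow> B) (at_left b)"
  shows "(\<integral>\<^sup>+y. indicator {a<..<b} y * ennreal ((p - q*y) / ((1 - y\<^sup>2) * sqrt (1 - y\<^sup>2 - (p - q*y)\<^sup>2))) \<partial>lborel)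
     = ennreal (B - A)"
proof (rule nn_FTC_open[OF \<open>a<b\<close> _ _ _ LA LB])
  fix y assume y: "a < y" "y < b"
  have d: "D y > 0" using Dpos[OF y] .
  then show "((\<lambda>y. arctan ((p*y - q) / sqrt (D y))) has_real_derivative
     (p - q*y) / ((1 - y\<^sup>2) * sqrt (1 - y\<^sup>2 - (p - q*y)\<^sup>2))) (at y)"
    using outer_deriv[where p=p and q=q and y=y] unfolding D_def by simp
  have 1: "1 - y\<^sup>2 > 0" using d unfolding D_def by (smt (verit) zero_le_power2)
  show "isCont (\<lambda>y. (p - q*y) / ((1 - y\<^sup>2) * sqrt (1 - y\<^sup>2 - (p - q*y)\<^sup>2))) y"
    using d 1 unfolding D_def by (intro continuous_intros) auto
  show "0 \<le> (p - q*y) / ((1 - y\<^sup>2) * sqrt (1 - y\<^sup>2 - (p - q*y)\<^sup>2))"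
    using d 1 Xnn[OF y] unfolding D_def by simp
qed

lemma lim_inf_aux:
  fixes N D :: "real \<Rightarrow> real"
  assumes "(D \<longlongrightarrow> 0) F" "eventually (\<lambda>y. D y > 0) F"
  shows "filterlim (\<lambda>y. inverse (sqrt (D y))) at_top F"
proof -
  have "((\<lambda>y. sqrt (D y)) \<longlongrightarrow> 0) F" using tendsto_real_sqrt[OF assms(1)] by simp
  moreover have "eventually (\<lambda>y. sqrt (D y) > 0) F" using assms(2) by (rule eventually_mono) simp
  ultimately have "filterlim (\<lambda>y. sqrt (D y)) (at_right 0) F"
    by (rule tendsto_imp_filterlim_at_right)
  then show ?thesis by (rule filterlim_compose[OF filterlim_inverse_at_top_right])
qed

lemma lim_arctan_bot:
  fixes N D :: "real \<Rightarrow> real"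
  assumes "(N \<longlongrightarrow> n) F" "n < 0" "(D \<longlongrightarrow> 0) F" "eventually (\<lambda>y. D y > 0) F"
  shows "((\<lambda>y. arctan (N y / sqrt (D y))) \<longlongrightarrow> -(pi/2)) F"
proof -
  have L: "filterlim (\<lambda>y. N y * inverse (sqrt (D y))) at_bot F"
    by (rule filterlim_tendsto_neg_mult_at_bot[OF assms(1,2) lim_inf_aux[OF assms(3,4)]])
  have "((\<lambda>y. arctan (N y * inverse (sqrt (D y)))) \<longlongrightarrow> -(pi/2)) F"
    by (rule filterlim_compose[OF tendsto_arctan_at_bot L])
  then show ?thesis by (simp only: divide_inverse)
qed

lemma lim_arctan_top:
  fixes N D :: "real \<Rightarrow> real"
  assumes "(N \<longlongrightarrow> n) F" "n > 0" "(D \<longlongrightarrow> 0) F" "eventually (\<lambda>y. D y > 0) F"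
  shows "((\<lambda>y. arctan (N y / sqrt (D y))) \<longlongrightarrow> pi/2) F"
proof -
  have L: "filterlim (\<lambda>y. N y * inverse (sqrt (D y))) at_top F"
    by (rule filterlim_tendsto_pos_mult_at_top[OF assms(1,2) lim_inf_aux[OF assms(3,4)]])
  have "((\<lambda>y. arctan (N y * inverse (sqrt (D y)))) \<longlongrightarrow> pi/2) F"
    by (rule filterlim_compose[OF tendsto_arctan_at_top L])
  then show ?thesis by (simp only: divide_inverse)
qed

text \<open>Limit at y -> 1 from the left when the line passes through (0,1) ... x = p - p y.\<close>
lemma lim_at_one:
  fixes p :: real
  shows "((\<lambda>y. arctan ((p*y - p) / sqrt (1 - y\<^sup>2 - (p - p*y)\<^sup>2))) \<longlongrightarrow> 0) (at_left 1)"
proof -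
  define B where "B = (\<lambda>y::real. 1 + y - p\<^sup>2 * (1 - y))"
  have ev: "eventually (\<lambda>y. y < 1 \<and> B y > 0) (at_left (1::real))"
  proof -
    have "((\<lambda>y. B y) \<longlongrightarrow> B 1) (at_left 1)" unfolding B_def by (intro tendsto_intros)
    moreover have "B 1 > 0" unfolding B_def by simp
    ultimately have "eventually (\<lambda>y. B y > 0) (at_left (1::real))" by (rule order_tendstoD)
    moreover have "eventually (\<lambda>y. y < (1::real)) (at_left 1)" by (simp add: eventually_at_filter)
    ultimately show ?thesis by eventually_elim auto
  qed
  have "eventually (\<lambda>y. arctan ((p*y - p) / sqrt (1 - y\<^sup>2 - (p - p*y)\<^sup>2)) = arctan (- p * sqrt (1 - y) / sqrt (B y))) (at_left 1)"
    using ev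
  proof eventually_elim
    case (elim y)
    have e: "1 - y\<^sup>2 - (p - p*y)\<^sup>2 = (1 - y) * B y" unfolding B_def by (simp add: algebra_simps power2_eq_square)
    have s: "sqrt (1 - y) > 0" using elim by simp
    have pe: "p*y - p = - p * (sqrt (1 - y) * sqrt (1 - y))" using elim by (simp add: algebra_simps)
    have "(p*y - p) / sqrt (1 - y\<^sup>2 - (p - p*y)\<^sup>2) = (- p * (sqrt (1 - y) * sqrt (1 - y))) / (sqrt (1 - y) * sqrt (B y))"
      by (simp only: e real_sqrt_mult pe)
    also have "\<dots> = - p * sqrt (1 - y) / sqrt (B y)" using s elim by (simp add: field_simps)
    finally have "(p*y - p) / sqrt (1 - y\<^sup>2 - (p - p*y)\<^sup>2) = - p * sqrt (1 - y) / sqrt (B y)" .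
    then show ?case by simp
  qed
  moreover have "((\<lambda>y. arctan (- p * sqrt (1 - y) / sqrt (B y))) \<longlongrightarrow> arctan (- p * sqrt (1 - 1) / sqrt (B 1))) (at_left 1)"
    unfolding B_def by (intro tendsto_intros) auto
  ultimately show ?thesis by (simp add: tendsto_cong)
qed

lemma cont_lim:
  fixes p q e :: real
  defines "D \<equiv> \<lambda>y. 1 - y\<^sup>2 - (p - q*y)\<^sup>2"
  assumes "D e > 0"
  shows "((\<lambda>y. arctan ((p*y - q) / sqrt (D y))) \<longlongrightarrow> arctan ((p*e - q) / sqrt (D e))) (at e within S)"
proof -
  have "isCont (\<lambda>y. arctan ((p*y - q) / sqrt (D y))) e"
    using outer_deriv[where p=p and q=q and y=e] assms unfolding D_def by (auto intro: DERIV_isCont)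
  then show ?thesis by (simp add: isCont_def tendsto_within_subset[OF _ subset_UNIV] tendsto_mono at_le)
qed



lemma tri_char:
  assumes "r > 0" "h > 0"
  shows "convex hull {(r,0), (0,0), (0,h)} = {z :: real \<times> real. 0 \<le> fst z \<and> 0 \<le> snd z \<and> fst z / r + snd z / h \<le> 1}"
proof -
  have "convex hull {(r,0), (0,0), (0,h)} = {u *\<^sub>R (r,0) + v *\<^sub>R (0,0) + w *\<^sub>R (0,h) | u v w :: real. 0 \<le> u \<and> 0 \<le> v \<and> 0 \<le> w \<and> u + v + w = 1}"
    by (rule convex_hull_3)
  also have "\<dots> = {z :: real \<times> real. 0 \<le> fst z \<and> 0 \<le> snd z \<and> fst z / r + snd z / h \<le> 1}"
  proof (intro set_eqI iffI)
    fix z assume "z \<in> {u *\<^sub>R (r,0) + v *\<^sub>R (0,0) + w *\<^sub>R (0,h) | u v w :: real. 0 \<le> u \<and> 0 \<le> v \<and> 0 \<le> w \<and> u + v + w = 1}"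
    then obtain u v w where z: "z = (u * r, w * h)" "0 \<le> u" "0 \<le> v" "0 \<le> w" "u + v + w = 1" by auto
    then show "z \<in> {z. 0 \<le> fst z \<and> 0 \<le> snd z \<and> fst z / r + snd z / h \<le> 1}" using assms by auto
  next
    fix z :: "real \<times> real" assume "z \<in> {z. 0 \<le> fst z \<and> 0 \<le> snd z \<and> fst z / r + snd z / h \<le> 1}"
    then have z: "0 \<le> fst z" "0 \<le> snd z" "fst z / r + snd z / h \<le> 1" by auto
    have "z = (fst z / r) *\<^sub>R (r,0) + (1 - fst z / r - snd z / h) *\<^sub>R (0,0) + (snd z / h) *\<^sub>R (0,h)"
      using assms by (cases z) auto
    moreover have "0 \<le> fst z / r" "0 \<le> 1 - fst z / r - snd z / h" "0 \<le> snd z / h" using z assms by auto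
    ultimately show "z \<in> {u *\<^sub>R (r,0) + v *\<^sub>R (0,0) + w *\<^sub>R (0,h) | u v w :: real. 0 \<le> u \<and> 0 \<le> v \<and> 0 \<le> w \<and> u + v + w = 1}"
      by (intro CollectI exI[of _ "fst z / r"] exI[of _ "1 - fst z / r - snd z / h"] exI[of _ "snd z / h"]) auto
  qed
  finally show ?thesis .
qed

definition Reg :: "real \<Rightarrow> real \<Rightarrow> (real \<times> real) set" where
  "Reg r h = {z. 0 \<le> fst z \<and> 0 \<le> snd z \<and> fst z / r + snd z / h \<le> 1 \<and> (fst z)\<^sup>2 + (snd z)\<^sup>2 < 1
      \<and> (r > 1 \<longrightarrow> fst z * r \<le> 1) \<and> (h > 1 \<longrightarrow> snd z * h \<le> 1)}"

lemma fst_meas[measurable]: "(fst :: real \<times> real \<Rightarrow> real) \<in> borel_measurable borel"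
  by (intro borel_measurable_continuous_onI continuous_intros)

lemma snd_meas[measurable]: "(snd :: real \<times> real \<Rightarrow> real) \<in> borel_measurable borel"
  by (intro borel_measurable_continuous_onI continuous_intros)

lemma Reg_meas[measurable]: "Reg r h \<in> sets borel"
  unfolding Reg_def by measurable

lemma orth_char:
  assumes "r > 0" "h > 0"
  shows "orthoscheme r h \<inter> klein_disc = Reg r h"
proof -
  have d: "z \<in> klein_disc \<longleftrightarrow> (fst z)\<^sup>2 + (snd z)\<^sup>2 < 1" for z :: "real \<times> real"
  proof -
    have "z \<in> klein_disc \<longleftrightarrow> norm z < 1" unfolding klein_disc_def by (simp add: dist_norm)
    also have "\<dots> \<longleftrightarrow> sqrt ((fst z)\<^sup>2 + (snd z)\<^sup>2) < 1" by (cases z) (simp add: norm_Pair)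
    also have "\<dots> \<longleftrightarrow> (fst z)\<^sup>2 + (snd z)\<^sup>2 < 1" by simp
    finally show ?thesis .
  qed
  have u1: "ultraideal (r,0) \<longleftrightarrow> r > 1" using assms unfolding ultraideal_def by (simp add: norm_Pair)
  have u2: "ultraideal (0,h) \<longleftrightarrow> h > 1" using assms unfolding ultraideal_def by (simp add: norm_Pair)
  have p1: "z \<in> polar_halfplane (r,0) \<longleftrightarrow> fst z * r \<le> 1" for z :: "real \<times> real"
    unfolding polar_halfplane_def by (cases z) (simp add: inner_Pair)
  have p2: "z \<in> polar_halfplane (0,h) \<longleftrightarrow> snd z * h \<le> 1" for z :: "real \<times> real"
    unfolding polar_halfplane_def by (cases z) (simp add: inner_Pair)
  show ?thesis
    unfolding orthoscheme_def truncate_at_def tri_char[OF assms] Reg_def u1 u2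
    by (auto simp: d p1 p2)
qed

lemma hyp_area_Reg:
  assumes "r > 0" "h > 0"
  shows "hyp_area (orthoscheme r h) = (\<integral>\<^sup>+z. indicator (Reg r h) z * ennreal (klein_area_density z) \<partial>lborel)"
proof -
  have "orthoscheme r h \<inter> klein_disc \<inter> klein_disc = Reg r h" using orth_char[OF assms] by auto
  then show ?thesis unfolding hyp_area_def by (simp add: Int_absorb2 orth_char[OF assms])
qed

lemma hyp_area_mono:
  assumes "r > 0" "h > 0" "h' > 0" "Reg r h \<subseteq> Reg r h'"
  shows "hyp_area (orthoscheme r h) \<le> hyp_area (orthoscheme r h')"
  unfolding hyp_area_Reg[OF assms(1,2)] hyp_area_Reg[OF assms(1,3)]
  using assms(4) by (intro nn_integral_mono) (auto split: split_indicator)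



lemma ev_right: "a < b \<Longrightarrow> (\<And>y. a < y \<Longrightarrow> y < b \<Longrightarrow> P y) \<Longrightarrow> eventually P (at_right (a::real))"
  unfolding eventually_at_right by blast

lemma ev_left: "a < b \<Longrightarrow> (\<And>y. a < y \<Longrightarrow> y < b \<Longrightarrow> P y) \<Longrightarrow> eventually P (at_left (b::real))"
  unfolding eventually_at_left by blast

lemma caseA_ineq:
  fixes r h x y :: real
  assumes "0 < r" "r \<le> 1" "1 \<le> h" "0 < y" "y * h < 1" "0 \<le> x" "x \<le> r - r/h*y"
  shows "x\<^sup>2 + y\<^sup>2 < 1"
proof -
  have "y \<le> y * h" using assms by (simp add: mult_le_cancel_left1)
  then have "y \<le> h" using assms by linarith
  then have "y/h \<le> 1" using assms by (simp add: field_simps)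
  have "x \<le> 1 - y/h"
  proof -
    have "r - r/h*y = r * (1 - y/h)" by (simp add: algebra_simps)
    also have "\<dots> \<le> 1 * (1 - y/h)" using assms \<open>y/h \<le> 1\<close> by (intro mult_right_mono) auto
    finally show ?thesis using assms by simp
  qed
  have x1: "x \<le> 1" using \<open>x \<le> 1 - y/h\<close> assms by (smt (verit) divide_nonneg_pos)
  have "x\<^sup>2 \<le> x" using x1 assms by (simp add: power2_eq_square mult_left_le)
  have "y < 1/h" using assms by (simp add: field_simps)
  then have "y * y < y * (1/h)" using assms(4) by (rule mult_strict_left_mono)
  then have "y\<^sup>2 < y/h" by (simp add: power2_eq_square)
  show ?thesis using \<open>x\<^sup>2 \<le> x\<close> \<open>y\<^sup>2 < y/h\<close> \<open>x \<le> 1 - y/h\<close> by simp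
qed

lemma areaA_int:
  fixes r h :: real
  assumes r: "0 < r" "r \<le> 1" and h: "1 \<le> h"
  shows "hyp_area (orthoscheme r h) = (\<integral>\<^sup>+y. indicator {0<..<1/h} y * ennreal ((r - r/h*y) / ((1 - y\<^sup>2) * sqrt (1 - y\<^sup>2 - (r - r/h*y)\<^sup>2))) \<partial>lborel)"
proof -
  have h0: "h > 0" using h by simp
  show ?thesis unfolding hyp_area_Reg[OF r(1) h0]
  proof (rule area_slices[where Xf = "\<lambda>y. r - r/h*y"])
    fix x y :: real assume y: "0 < y" "y < 1/h"
    have yh: "y * h < 1" using y h0 by (simp add: field_simps)
    show "(x, y) \<in> Reg r h \<longleftrightarrow> 0 \<le> x \<and> x \<le> r - r/h*y"
    proof
      assume "(x, y) \<in> Reg r h"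
      then have "0 \<le> x" "x / r + y / h \<le> 1" unfolding Reg_def by auto
      then show "0 \<le> x \<and> x \<le> r - r/h*y" using r h0 by (simp add: field_simps)
    next
      assume x: "0 \<le> x \<and> x \<le> r - r/h*y"
      have "x\<^sup>2 + y\<^sup>2 < 1" using caseA_ineq[OF r h y(1) yh] x by auto
      moreover have "x / r + y / h \<le> 1" using x r h0 by (simp add: field_simps)
      ultimately show "(x, y) \<in> Reg r h" unfolding Reg_def using x y yh r by auto
    qed
  next
    fix x y assume "(x, y) \<in> Reg r h"
    then have z: "0 \<le> x" "0 \<le> y" "x / r + y / h \<le> 1" "h > 1 \<longrightarrow> y * h \<le> 1" unfolding Reg_def by auto
    have "y \<le> 1/h"
    proof (cases "h > 1")
      case True then show ?thesis using z h0 by (simp add: field_simps)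
    next
      case False then have "h = 1" using h by simp
      then show ?thesis using z r by (smt (verit) divide_nonneg_pos div_by_1)
    qed
    then show "0 \<le> y \<and> y \<le> 1/h" using z by simp
  next
    fix y :: real assume y: "0 < y" "y < 1/h"
    have yh: "y * h < 1" using y h0 by (simp add: field_simps)
    have "y \<le> y * h" using y h by (simp add: mult_le_cancel_left1)
    then have "y \<le> h" using yh h by linarith
    then have "0 \<le> r - r/h*y" using y r h0 by (simp add: field_simps)
    then show "0 \<le> r - r/h*y \<and> (r - r/h*y)\<^sup>2 + y\<^sup>2 < 1" using caseA_ineq[OF r h y(1) yh, of "r - r/h*y"] by simp
  qed simp
qed

lemma caseA_D:
  fixes r h y :: real
  assumes "0 < r" "r \<le> 1" "1 \<le> h" "0 < y" "y < 1/h"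
  shows "1 - y\<^sup>2 - (r - r/h*y)\<^sup>2 > 0" "r - r/h*y \<ge> 0"
proof -
  have h0: "h > 0" using assms by simp
  have yh: "y * h < 1" using assms h0 by (simp add: field_simps)
  have "y \<le> y * h" using assms by (simp add: mult_le_cancel_left1)
  then have "y \<le> h" using yh assms by linarith
  then show "r - r/h*y \<ge> 0" using assms h0 by (simp add: field_simps)
  then show "1 - y\<^sup>2 - (r - r/h*y)\<^sup>2 > 0" using caseA_ineq[OF assms(1-4) yh, of "r - r/h*y"] by simp
qed

lemma caseA_LB:
  fixes r h :: real
  assumes r: "0 < r" "r \<le> 1" and h: "1 \<le> h"
  shows "((\<lambda>y. arctan ((r*y - r/h) / sqrt (1 - y\<^sup>2 - (r - r/h*y)\<^sup>2))) \<longlongrightarrow> 0) (at_left (1/h))"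
proof (cases "h = 1")
  case True
  then show ?thesis using lim_at_one[of r] by simp
next
  case False
  then have h1: "h > 1" using h by simp
  define c where "c = 1/h"
  have c: "0 < c" "c < 1" using h1 unfolding c_def by auto
  have e: "r - r/h*(1/h) = r * (1 - c\<^sup>2)" unfolding c_def by (simp add: power2_eq_square algebra_simps)
  have "r * (1 - c\<^sup>2) \<le> 1 - c\<^sup>2" using r c by (simp add: mult_le_cancel_right1 power_less_one_iff)
  moreover have "0 \<le> r * (1 - c\<^sup>2)" using r c by (simp add: power_le_one)
  ultimately have "(r * (1 - c\<^sup>2))\<^sup>2 \<le> (1 - c\<^sup>2)\<^sup>2" by (rule power_mono)
  moreover have "(1 - c\<^sup>2)\<^sup>2 < 1 - c\<^sup>2"
  proof -
    have "0 < 1 - c\<^sup>2" "1 - c\<^sup>2 < 1" using c by (auto simp: power_less_one_iff)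
    then show ?thesis by (simp add: power2_eq_square mult_less_cancel_left1)
  qed
  ultimately have D': "1 - c\<^sup>2 - (r * (1 - c\<^sup>2))\<^sup>2 > 0" by simp
  have "1 - (1/h)\<^sup>2 - (r - r/h*(1/h))\<^sup>2 = 1 - c\<^sup>2 - (r * (1 - c\<^sup>2))\<^sup>2"
    by (subst e) (simp add: c_def)
  with D' have D: "1 - (1/h)\<^sup>2 - (r - r/h*(1/h))\<^sup>2 > 0" by simp
  show ?thesis using cont_lim[where p=r and q="r/h" and e="1/h" and S="{..<1/h}", OF D] by simp
qed

lemma areaA_lt:
  fixes r h :: real
  assumes r: "0 < r" "r < 1" and h: "1 \<le> h"
  shows "hyp_area (orthoscheme r h) = ennreal (arctan (r / (h * sqrt (1 - r\<^sup>2))))"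
proof -
  have r': "0 < r" "r \<le> 1" using r by auto
  have D0: "1 - 0\<^sup>2 - (r - r/h*0)\<^sup>2 > 0" using r by (simp add: power_less_one_iff)
  have "hyp_area (orthoscheme r h) = ennreal (0 - arctan ((r*0 - r/h) / sqrt (1 - 0\<^sup>2 - (r - r/h*0)\<^sup>2)))"
    unfolding areaA_int[OF r' h]
  proof (rule piece)
    show "0 < 1/h" using h by simp
  next
    fix y :: real assume "0 < y" "y < 1/h"
    then show "1 - y\<^sup>2 - (r - r/h*y)\<^sup>2 > 0" "r - r/h*y \<ge> 0" using caseA_D[OF r' h] by auto
  next
    show "((\<lambda>y. arctan ((r*y - r/h) / sqrt (1 - y\<^sup>2 - (r - r/h*y)\<^sup>2))) \<longlongrightarrow> 0) (at_left (1/h))"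
      by (rule caseA_LB[OF r' h])
  next
    show "((\<lambda>y. arctan ((r*y - r/h) / sqrt (1 - y\<^sup>2 - (r - r/h*y)\<^sup>2))) \<longlongrightarrow>
        arctan ((r*0 - r/h) / sqrt (1 - 0\<^sup>2 - (r - r/h*0)\<^sup>2))) (at_right 0)"
      by (rule cont_lim[where p=r and q="r/h" and e=0 and S="{0<..}", OF D0])
  qed
  also have "0 - arctan ((r*0 - r/h) / sqrt (1 - 0\<^sup>2 - (r - r/h*0)\<^sup>2)) = arctan (r / (h * sqrt (1 - r\<^sup>2)))"
    by (simp add: arctan_minus field_simps)
  finally show ?thesis .
qed

lemma areaA_eq:
  fixes h :: real
  assumes h: "1 \<le> h"
  shows "hyp_area (orthoscheme 1 h) = ennreal (pi/2)"
proof -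
  have r': "0 < (1::real)" "(1::real) \<le> 1" by auto
  have "hyp_area (orthoscheme 1 h) = ennreal (0 - (- (pi/2)))"
    unfolding areaA_int[OF r' h]
  proof (rule piece)
    show "0 < 1/h" using h by simp
  next
    fix y :: real assume "0 < y" "y < 1/h"
    then show "1 - y\<^sup>2 - (1 - 1/h*y)\<^sup>2 > 0" "1 - 1/h*y \<ge> 0" using caseA_D[OF r' h] by auto
  next
    show "((\<lambda>y. arctan ((1*y - 1/h) / sqrt (1 - y\<^sup>2 - (1 - 1/h*y)\<^sup>2))) \<longlongrightarrow> 0) (at_left (1/h))"
      by (rule caseA_LB[OF r' h])
  next
    have ev: "eventually (\<lambda>y. 1 - y\<^sup>2 - (1 - 1/h*y)\<^sup>2 > 0) (at_right 0)"
      by (rule ev_right[of 0 "1/h"]) (use h caseA_D[OF r' h] in auto)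
    show "((\<lambda>y. arctan ((1*y - 1/h) / sqrt (1 - y\<^sup>2 - (1 - 1/h*y)\<^sup>2))) \<longlongrightarrow> - (pi/2)) (at_right 0)"
    proof (rule lim_arctan_bot[OF _ _ _ ev])
      show "((\<lambda>y. 1*y - 1/h) \<longlongrightarrow> 0 - 1/h) (at_right 0)"
        using tendsto_diff[OF tendsto_ident_at[of "0::real" "{0<..}"] tendsto_const[of "1/h"]] by simp
      show "0 - 1/h < 0" using h by simp
      have "((\<lambda>y. 1 - y\<^sup>2 - (1 - 1/h*y)\<^sup>2) \<longlongrightarrow> 1 - 0\<^sup>2 - (1 - 1/h*0)\<^sup>2) (at_right 0)" by (intro tendsto_intros)
      then show "((\<lambda>y. 1 - y\<^sup>2 - (1 - 1/h*y)\<^sup>2) \<longlongrightarrow> 0) (at_right 0)" by simp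
    qed
  qed
  then show ?thesis by simp
qed



lemma caseAp_ineq:
  fixes r h x y :: real
  assumes "0 < r" "r < 1" "0 < h" "h < 1" "0 < y" "y < h" "0 \<le> x" "x \<le> r - r/h*y"
  shows "x\<^sup>2 + y\<^sup>2 < 1"
proof -
  have a: "0 < 1 - y/h" using assms by (simp add: field_simps)
  have "r - r/h*y = r * (1 - y/h)" by (simp add: algebra_simps)
  also have "\<dots> < 1 * (1 - y/h)" using assms a by (intro mult_strict_right_mono) auto
  finally have x: "x < 1 - y/h" using assms by simp
  have "y \<le> y / h" using assms by (simp add: field_simps mult_le_cancel_left1)
  then have "x + y < 1" using x by simp
  then have "(x + y)\<^sup>2 < 1" using assms by (simp add: power_less_one_iff)
  moreover have "x\<^sup>2 + y\<^sup>2 \<le> (x + y)\<^sup>2" using assms by (simp add: power2_sum)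
  ultimately show ?thesis by simp
qed

lemma areaAp:
  fixes r h :: real
  assumes r: "0 < r" "r < 1" and h: "0 < h" "h < 1"
  shows "hyp_area (orthoscheme r h) = ennreal (arctan ((r*h - r/h) / sqrt (1 - h\<^sup>2 - (r - r/h*h)\<^sup>2)) - arctan ((r*0 - r/h) / sqrt (1 - 0\<^sup>2 - (r - r/h*0)\<^sup>2)))"
proof -
  have int: "hyp_area (orthoscheme r h) = (\<integral>\<^sup>+y. indicator {0<..<h} y * ennreal ((r - r/h*y) / ((1 - y\<^sup>2) * sqrt (1 - y\<^sup>2 - (r - r/h*y)\<^sup>2))) \<partial>lborel)"
    unfolding hyp_area_Reg[OF r(1) h(1)]
  proof (rule area_slices[where Xf = "\<lambda>y. r - r/h*y"])
    fix x y :: real assume y: "0 < y" "y < h"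
    show "(x, y) \<in> Reg r h \<longleftrightarrow> 0 \<le> x \<and> x \<le> r - r/h*y"
    proof
      assume "(x, y) \<in> Reg r h"
      then have "0 \<le> x" "x / r + y / h \<le> 1" unfolding Reg_def by auto
      then show "0 \<le> x \<and> x \<le> r - r/h*y" using r h by (simp add: field_simps)
    next
      assume x: "0 \<le> x \<and> x \<le> r - r/h*y"
      have "x\<^sup>2 + y\<^sup>2 < 1" using caseAp_ineq[OF r h y] x by auto
      moreover have "x / r + y / h \<le> 1" using x r h by (simp add: field_simps)
      ultimately show "(x, y) \<in> Reg r h" unfolding Reg_def using x y r h by auto
    qed
  next
    fix x y assume "(x, y) \<in> Reg r h"
    then have z: "0 \<le> x" "0 \<le> y" "x / r + y / h \<le> 1" unfolding Reg_def by auto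
    then have "y / h \<le> 1" using r by (smt (verit) divide_nonneg_pos)
    then show "0 \<le> y \<and> y \<le> h" using z h by (simp add: field_simps)
  next
    fix y :: real assume y: "0 < y" "y < h"
    have "0 \<le> r - r/h*y" using y r h by (simp add: field_simps)
    then show "0 \<le> r - r/h*y \<and> (r - r/h*y)\<^sup>2 + y\<^sup>2 < 1" using caseAp_ineq[OF r h y, of "r - r/h*y"] by simp
  qed simp
  have D0: "1 - 0\<^sup>2 - (r - r/h*0)\<^sup>2 > 0" using r by (simp add: power_less_one_iff)
  have Dh: "1 - h\<^sup>2 - (r - r/h*h)\<^sup>2 > 0" using h by (simp add: power_less_one_iff)
  show ?thesis
    unfolding int
  proof (rule piece)
    show "(0::real) < h" using h by simp
  next
    fix y :: real assume y: "0 < y" "y < h"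
    have "0 \<le> r - r/h*y" using y r h by (simp add: field_simps)
    then show "1 - y\<^sup>2 - (r - r/h*y)\<^sup>2 > 0" "r - r/h*y \<ge> 0" using caseAp_ineq[OF r h y, of "r - r/h*y"] by auto
  next
    show "((\<lambda>y. arctan ((r*y - r/h) / sqrt (1 - y\<^sup>2 - (r - r/h*y)\<^sup>2))) \<longlongrightarrow>
        arctan ((r*h - r/h) / sqrt (1 - h\<^sup>2 - (r - r/h*h)\<^sup>2))) (at_left h)"
      by (rule cont_lim[where p=r and q="r/h" and e=h and S="{..<h}", OF Dh])
  next
    show "((\<lambda>y. arctan ((r*y - r/h) / sqrt (1 - y\<^sup>2 - (r - r/h*y)\<^sup>2))) \<longlongrightarrow>
        arctan ((r*0 - r/h) / sqrt (1 - 0\<^sup>2 - (r - r/h*0)\<^sup>2))) (at_right 0)"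
      by (rule cont_lim[where p=r and q="r/h" and e=0 and S="{0<..}", OF D0])
  qed
qed

lemma caseB_ineq:
  fixes r h x y :: real
  assumes "1 < r" "1 \<le> h" "0 < y" "y * h < 1" "0 \<le> x" "x * r \<le> 1" "x \<le> r - r/h*y"
  shows "x\<^sup>2 + y\<^sup>2 < 1"
proof -
  have h0: "h > 0" using assms by simp
  have "y < 1/h" using assms h0 by (simp add: field_simps)
  then have "y * y < y * (1/h)" using assms(3) by (rule mult_strict_left_mono)
  then have yy: "y\<^sup>2 < y/h" by (simp add: power2_eq_square)
  have "y \<le> y * h" using assms by (simp add: mult_le_cancel_left1)
  then have "y \<le> h" using assms by linarith
  then have u1: "y/h \<le> 1" using h0 by (simp add: field_simps)
  show ?thesis
  proof (cases "y/h \<le> 1 - 1/r\<^sup>2")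
    case True
    have "x \<le> 1/r" using assms by (simp add: field_simps)
    then have "x\<^sup>2 \<le> (1/r)\<^sup>2" using assms by (intro power_mono) auto
    then show ?thesis using True yy by (simp add: power_divide)
  next
    case False
    have w0: "0 \<le> 1 - y/h" using u1 by simp
    have w1: "r\<^sup>2 * (1 - y/h) \<le> 1" using False assms by (simp add: field_simps)
    have "r - r/h*y = r * (1 - y/h)" by (simp add: algebra_simps)
    then have "x\<^sup>2 \<le> (r * (1 - y/h))\<^sup>2" using assms by (intro power_mono) auto
    also have "\<dots> = (1 - y/h) * (r\<^sup>2 * (1 - y/h))" by (simp only: power_mult_distrib power2_eq_square mult_ac)
    also have "\<dots> \<le> (1 - y/h) * 1" using w0 w1 by (intro mult_left_mono) auto
    finally show ?thesis using yy by simp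
  qed
qed



lemma split_int:
  fixes g g1 g2 :: "real \<Rightarrow> real"
  assumes "0 < y1" "y1 \<le> b"
  assumes [measurable]: "g1 \<in> borel_measurable borel" "g2 \<in> borel_measurable borel"
  assumes e1: "\<And>y. 0 < y \<Longrightarrow> y < y1 \<Longrightarrow> g y = g1 y"
  assumes e2: "\<And>y. y1 < y \<Longrightarrow> y < b \<Longrightarrow> g y = g2 y"
  shows "(\<integral>\<^sup>+y. indicator {0<..<b} y * ennreal (g y) \<partial>lborel)
    = (\<integral>\<^sup>+y. indicator {0<..<y1} y * ennreal (g1 y) \<partial>lborel) + (\<integral>\<^sup>+y. indicator {y1<..<b} y * ennreal (g2 y) \<partial>lborel)"
proof -
  have "(\<integral>\<^sup>+y. indicator {0<..<y1} y * ennreal (g1 y) \<partial>lborel) + (\<integral>\<^sup>+y. indicator {y1<..<b} y * ennreal (g2 y) \<partial>lborel)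
     = (\<integral>\<^sup>+y. indicator {0<..<y1} y * ennreal (g1 y) + indicator {y1<..<b} y * ennreal (g2 y) \<partial>lborel)"
    by (rule nn_integral_add[symmetric]) auto
  also have "\<dots> = (\<integral>\<^sup>+y. indicator {0<..<b} y * ennreal (g y) \<partial>lborel)"
  proof (rule nn_integral_cong_AE)
    show "AE y in lborel. indicator {0<..<y1} y * ennreal (g1 y) + indicator {y1<..<b} y * ennreal (g2 y) = indicator {0<..<b} y * ennreal (g y)"
      using AE_lborel_singleton[of y1]
    proof eventually_elim
      case (elim y)
      show ?case
      proof (cases "y < y1")
        case True then show ?thesis using e1[of y] assms(1,2) by (auto simp: indicator_def)
      next
        case False then have "y > y1" using elim by simp
        then show ?thesis using e2[of y] assms(1,2) by (auto simp: indicator_def)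
      qed
    qed
  qed
  finally show ?thesis ..
qed

lemma areaB_int:
  fixes r h :: real
  assumes r: "1 < r" and h: "1 \<le> h"
  shows "hyp_area (orthoscheme r h) = (\<integral>\<^sup>+y. indicator {0<..<1/h} y * ennreal (min (1/r) (r - r/h*y) / ((1 - y\<^sup>2) * sqrt (1 - y\<^sup>2 - (min (1/r) (r - r/h*y))\<^sup>2))) \<partial>lborel)"
proof -
  have h0: "h > 0" and r0: "r > 0" using h r by auto
  have yh_le: "y \<le> h" if "0 < y" "y * h < 1" for y
  proof -
    have "y \<le> y * h" using that h by (simp add: mult_le_cancel_left1)
    then show ?thesis using that h by linarith
  qed
  show ?thesis unfolding hyp_area_Reg[OF r0 h0]
  proof (rule area_slices[where Xf = "\<lambda>y. min (1/r) (r - r/h*y)"])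
    fix x y :: real assume y: "0 < y" "y < 1/h"
    have yh: "y * h < 1" using y h0 by (simp add: field_simps)
    show "(x, y) \<in> Reg r h \<longleftrightarrow> 0 \<le> x \<and> x \<le> min (1/r) (r - r/h*y)"
    proof
      assume "(x, y) \<in> Reg r h"
      then have "0 \<le> x" "x / r + y / h \<le> 1" "x * r \<le> 1" using r unfolding Reg_def by auto
      then show "0 \<le> x \<and> x \<le> min (1/r) (r - r/h*y)" using r0 h0 by (simp add: field_simps)
    next
      assume x: "0 \<le> x \<and> x \<le> min (1/r) (r - r/h*y)"
      then have x1: "x * r \<le> 1" "x \<le> r - r/h*y" using r0 by (auto simp: field_simps)
      have "x\<^sup>2 + y\<^sup>2 < 1" using caseB_ineq[OF r h y(1) yh _ x1] x by auto
      moreover have "x / r + y / h \<le> 1" using x1 r0 h0 by (simp add: field_simps)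
      ultimately show "(x, y) \<in> Reg r h" unfolding Reg_def using x x1 y yh by auto
    qed
  next
    fix x y assume "(x, y) \<in> Reg r h"
    then have z: "0 \<le> x" "0 \<le> y" "x / r + y / h \<le> 1" "h > 1 \<longrightarrow> y * h \<le> 1" unfolding Reg_def by auto
    have "y \<le> 1/h"
    proof (cases "h > 1")
      case True then show ?thesis using z h0 by (simp add: field_simps)
    next
      case False then have "h = 1" using h by simp
      then show ?thesis using z r0 by (smt (verit) divide_nonneg_pos div_by_1)
    qed
    then show "0 \<le> y \<and> y \<le> 1/h" using z by simp
  next
    fix y :: real assume y: "0 < y" "y < 1/h"
    have yh: "y * h < 1" using y h0 by (simp add: field_simps)
    have "0 \<le> r - r/h*y" using yh_le[OF y(1) yh] r0 h0 by (simp add: field_simps)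
    then have m0: "0 \<le> min (1/r) (r - r/h*y)" using r0 by simp
    have "min (1/r) (r - r/h*y) * r \<le> 1/r * r" using r0 by (intro mult_right_mono) auto
    then have x1: "min (1/r) (r - r/h*y) * r \<le> 1" using r0 by simp
    show "0 \<le> min (1/r) (r - r/h*y) \<and> (min (1/r) (r - r/h*y))\<^sup>2 + y\<^sup>2 < 1"
      using caseB_ineq[OF r h y(1) yh m0 x1] m0 by simp
  qed simp
qed



lemma arctan_sum_inv: "a > 0 \<Longrightarrow> arctan a + arctan (1/a) = pi/2"
  using Transcendental.arctan_inverse[of a] by simp

lemma areaB:
  fixes r h :: real
  assumes r: "1 < r" and h: "1 \<le> h" and k: "h\<^sup>2 * (1 - 1/r\<^sup>2) \<le> 1"
  shows "hyp_area (orthoscheme r h) = ennreal (pi/2)"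
proof -
  have h0: "h > 0" and r0: "r > 0" using h r by auto
  define y1 where "y1 = h * (1 - 1/r\<^sup>2)"
  define c where "c = 1/h"
  have r2: "0 < 1 - 1/r\<^sup>2" "1/r\<^sup>2 < 1" using r by (auto simp: field_simps)
  have y1pos: "0 < y1" unfolding y1_def using h0 r2 by simp
  have y1c: "y1 \<le> c"
  proof -
    have "h * y1 \<le> 1" using k unfolding y1_def by (simp add: power2_eq_square mult.assoc)
    then show ?thesis unfolding c_def using h0 by (simp add: field_simps)
  qed
  have y1h: "y1 / h = 1 - 1/r\<^sup>2" unfolding y1_def using h0 by simp
  have Xy1: "r - r/h*y1 = 1/r" unfolding y1_def using h0 r0 by (simp add: field_simps power2_eq_square)
  define g where "g = (\<lambda>y. min (1/r) (r - r/h*y) / ((1 - y\<^sup>2) * sqrt (1 - y\<^sup>2 - (min (1/r) (r - r/h*y))\<^sup>2)))"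
  define g1 where "g1 = (\<lambda>y. (1/r - 0*y) / ((1 - y\<^sup>2) * sqrt (1 - y\<^sup>2 - (1/r - 0*y)\<^sup>2)))"
  define g2 where "g2 = (\<lambda>y. (r - r/h*y) / ((1 - y\<^sup>2) * sqrt (1 - y\<^sup>2 - (r - r/h*y)\<^sup>2)))"
  have lt: "1/r < r - r/h*y" if "y < y1" for y
  proof -
    have "r/h*y < r/h*y1" using that r0 h0 by (intro mult_strict_left_mono) auto
    then show ?thesis using Xy1 by linarith
  qed
  have gt: "r - r/h*y < 1/r" if "y1 < y" for y
  proof -
    have "r/h*y1 < r/h*y" using that r0 h0 by (intro mult_strict_left_mono) auto
    then show ?thesis using Xy1 by linarith
  qed
  have split: "(\<integral>\<^sup>+y. indicator {0<..<c} y * ennreal (g y) \<partial>lborel)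
    = (\<integral>\<^sup>+y. indicator {0<..<y1} y * ennreal (g1 y) \<partial>lborel) + (\<integral>\<^sup>+y. indicator {y1<..<c} y * ennreal (g2 y) \<partial>lborel)"
  proof (rule split_int[OF y1pos y1c])
    show "g1 \<in> borel_measurable borel" unfolding g1_def by measurable
    show "g2 \<in> borel_measurable borel" unfolding g2_def by measurable
    fix y assume "0 < y" "y < y1"
    then show "g y = g1 y" unfolding g_def g1_def using lt[of y] by simp
  next
    fix y assume "y1 < y" "y < c"
    then show "g y = g2 y" unfolding g_def g2_def using gt[of y] by simp
  qed
  have area: "hyp_area (orthoscheme r h) = (\<integral>\<^sup>+y. indicator {0<..<y1} y * ennreal (g1 y) \<partial>lborel) + (\<integral>\<^sup>+y. indicator {y1<..<c} y * ennreal (g2 y) \<partial>lborel)"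
    using areaB_int[OF r h] split unfolding g_def c_def by simp
  have D1: "1 - y\<^sup>2 - (1/r - 0*y)\<^sup>2 > 0" if "0 < y" "y < y1" for y
  proof -
    have "h * y < h * y1" using that h0 by (intro mult_strict_left_mono) auto
    moreover have "h * y1 \<le> 1" using y1c h0 unfolding c_def by (simp add: field_simps)
    ultimately have yh: "y * h < 1" by (simp add: mult.commute)
    have "(1/r)\<^sup>2 + y\<^sup>2 < 1" using caseB_ineq[OF r h that(1) yh, of "1/r"] lt[OF that(2)] r0 by simp
    then show ?thesis by simp
  qed
  have D2: "1 - y\<^sup>2 - (r - r/h*y)\<^sup>2 > 0" "r - r/h*y \<ge> 0" if "y1 < y" "y < c" for y
  proof -
    have y0: "0 < y" using that y1pos by simp
    have yh: "y * h < 1" using that h0 unfolding c_def by (simp add: field_simps)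
    have "y \<le> y * h" using y0 h by (simp add: mult_le_cancel_left1)
    then have "y \<le> h" using yh h by linarith
    then show nn: "r - r/h*y \<ge> 0" using r0 h0 by (simp add: field_simps)
    have "(r - r/h*y) * r \<le> 1/r * r" using gt[OF that(1)] r0 by (intro mult_right_mono) auto
    then have "(r - r/h*y) * r \<le> 1" using r0 by simp
    then have "(r - r/h*y)\<^sup>2 + y\<^sup>2 < 1" using caseB_ineq[OF r h y0 yh nn] by simp
    then show "1 - y\<^sup>2 - (r - r/h*y)\<^sup>2 > 0" by simp
  qed
  have D10: "1 - 0\<^sup>2 - (1/r - 0*0)\<^sup>2 > 0" using r2 by (simp add: power_divide)
  have P1: "(\<integral>\<^sup>+y. indicator {0<..<y1} y * ennreal (g1 y) \<partial>lborel) = ennreal (B - 0)"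
    if LB: "((\<lambda>y. arctan ((1/r*y - 0) / sqrt (1 - y\<^sup>2 - (1/r - 0*y)\<^sup>2))) \<longlongrightarrow> B) (at_left y1)" for B
    unfolding g1_def
  proof (rule piece[OF y1pos])
    fix y :: real assume "0 < y" "y < y1"
    then show "1 - y\<^sup>2 - (1/r - 0*y)\<^sup>2 > 0" "1/r - 0*y \<ge> 0" using D1 r0 by auto
  next
    show "((\<lambda>y. arctan ((1/r*y - 0) / sqrt (1 - y\<^sup>2 - (1/r - 0*y)\<^sup>2))) \<longlongrightarrow> 0) (at_right 0)"
      using cont_lim[where p="1/r" and q=0 and e=0 and S="{0<..}", OF D10] by simp
  qed (rule LB)
  show ?thesis
  proof (cases "h\<^sup>2 * (1 - 1/r\<^sup>2) = 1")
    case True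
    have yc: "y1 = c" unfolding y1_def c_def using True h0 by (simp add: field_simps power2_eq_square)
    have s0: "1 - y1\<^sup>2 - (1/r - 0*y1)\<^sup>2 = 0"
    proof -
      have "y1\<^sup>2 = 1 - 1/r\<^sup>2" unfolding yc c_def using True h0 by (simp add: field_simps power2_eq_square)
      then show ?thesis by (simp add: power_divide)
    qed
    have L: "((\<lambda>y. arctan ((1/r*y - 0) / sqrt (1 - y\<^sup>2 - (1/r - 0*y)\<^sup>2))) \<longlongrightarrow> pi/2) (at_left y1)"
    proof (rule lim_arctan_top)
      show "((\<lambda>y. 1/r*y - 0) \<longlongrightarrow> 1/r*y1 - 0) (at_left y1)" by (intro tendsto_intros)
      show "1/r*y1 - 0 > 0" using y1pos r0 by simp
      have "((\<lambda>y. 1 - y\<^sup>2 - (1/r - 0*y)\<^sup>2) \<longlongrightarrow> 1 - y1\<^sup>2 - (1/r - 0*y1)\<^sup>2) (at_left y1)" by (intro tendsto_intros)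
      then show "((\<lambda>y. 1 - y\<^sup>2 - (1/r - 0*y)\<^sup>2) \<longlongrightarrow> 0) (at_left y1)" using s0 by simp
      show "eventually (\<lambda>y. 1 - y\<^sup>2 - (1/r - 0*y)\<^sup>2 > 0) (at_left y1)"
        by (rule ev_left[OF y1pos]) (rule D1)
    qed
    have "(\<integral>\<^sup>+y. indicator {y1<..<c} y * ennreal (g2 y) \<partial>lborel) = 0" using yc by simp
    then show ?thesis unfolding area P1[OF L] by simp
  next
    case False
    then have k1: "h\<^sup>2 * (1 - 1/r\<^sup>2) < 1" using k by simp
    have y1c': "y1 < c"
    proof -
      have "h * y1 < 1" using k1 unfolding y1_def by (simp add: power2_eq_square mult.assoc)
      then show ?thesis unfolding c_def using h0 by (simp add: field_simps)
    qed
    define s where "s = sqrt (1 - y1\<^sup>2 - (1/r)\<^sup>2)"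
    have s2: "1 - y1\<^sup>2 - (1/r)\<^sup>2 > 0"
    proof -
      have "y1\<^sup>2 = (h\<^sup>2 * (1 - 1/r\<^sup>2)) * (1 - 1/r\<^sup>2)" unfolding y1_def by (simp add: power2_eq_square)
      also have "\<dots> < 1 * (1 - 1/r\<^sup>2)" using k1 r2 by (intro mult_strict_right_mono) auto
      finally show ?thesis by (simp add: power_divide)
    qed
    then have s: "s > 0" unfolding s_def by simp
    have E1: "1 - y1\<^sup>2 - (1/r - 0*y1)\<^sup>2 > 0" using s2 by simp
    have L1: "((\<lambda>y. arctan ((1/r*y - 0) / sqrt (1 - y\<^sup>2 - (1/r - 0*y)\<^sup>2))) \<longlongrightarrow> arctan ((y1/r) / s)) (at_left y1)"
      using cont_lim[where p="1/r" and q=0 and e=y1 and S="{..<y1}", OF E1] unfolding s_def by simp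
    have E2: "1 - y1\<^sup>2 - (r - r/h*y1)\<^sup>2 > 0" using s2 Xy1 by simp
    have L2: "((\<lambda>y. arctan ((r*y - r/h) / sqrt (1 - y\<^sup>2 - (r - r/h*y)\<^sup>2))) \<longlongrightarrow> arctan ((r*y1 - r/h) / s)) (at_right y1)"
      using cont_lim[where p=r and q="r/h" and e=y1 and S="{y1<..}", OF E2] unfolding s_def Xy1 by simp
    have L3: "((\<lambda>y. arctan ((r*y - r/h) / sqrt (1 - y\<^sup>2 - (r - r/h*y)\<^sup>2))) \<longlongrightarrow> 0) (at_left c)"
    proof (cases "h = 1")
      case True
      then show ?thesis unfolding c_def using lim_at_one[of r] by simp
    next
      case False
      then have h1: "h > 1" using h by simp
      have cc: "0 < c" "c < 1" using h1 unfolding c_def by auto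
      have e: "r - r/h*(1/h) = r * (1 - c\<^sup>2)" unfolding c_def by (simp add: power2_eq_square algebra_simps)
      have w: "r\<^sup>2 * (1 - c\<^sup>2) < 1"
      proof -
        have "1 - 1/r\<^sup>2 < c\<^sup>2" using k1 h0 unfolding c_def by (simp add: field_simps power2_eq_square)
        then show ?thesis using r0 by (simp add: field_simps)
      qed
      have w0: "0 < 1 - c\<^sup>2" using cc by (simp add: power_less_one_iff)
      have "(r * (1 - c\<^sup>2))\<^sup>2 = (1 - c\<^sup>2) * (r\<^sup>2 * (1 - c\<^sup>2))" by (simp only: power_mult_distrib power2_eq_square mult_ac)
      also have "\<dots> < (1 - c\<^sup>2) * 1" using w w0 by (intro mult_strict_left_mono) auto
      finally have D': "1 - c\<^sup>2 - (r * (1 - c\<^sup>2))\<^sup>2 > 0" by simp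
      have "1 - (1/h)\<^sup>2 - (r - r/h*(1/h))\<^sup>2 = 1 - c\<^sup>2 - (r * (1 - c\<^sup>2))\<^sup>2"
        by (subst e) (simp add: c_def)
      with D' have D: "1 - (1/h)\<^sup>2 - (r - r/h*(1/h))\<^sup>2 > 0" by simp
      show ?thesis unfolding c_def using cont_lim[where p=r and q="r/h" and e="1/h" and S="{..<1/h}", OF D] by simp
    qed
    have P2: "(\<integral>\<^sup>+y. indicator {y1<..<c} y * ennreal (g2 y) \<partial>lborel) = ennreal (0 - arctan ((r*y1 - r/h) / s))"
      unfolding g2_def
    proof (rule piece[OF y1c'])
      fix y :: real assume "y1 < y" "y < c"
      then show "1 - y\<^sup>2 - (r - r/h*y)\<^sup>2 > 0" "r - r/h*y \<ge> 0" using D2 by auto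
    qed (rule L2, rule L3)
    define a where "a = (y1/r) / s"
    have a0: "a > 0" unfolding a_def using y1pos r0 s by simp
    have inv: "- ((r*y1 - r/h) / s) = 1/a"
    proof -
      have "(y1/r) * (r * (1/h - y1)) = y1 / h - y1\<^sup>2" using r0 by (simp add: field_simps power2_eq_square)
      also have "\<dots> = s * s" unfolding y1h s_def using s2 by (simp add: power_divide)
      finally have m: "(y1/r) * (r * (1/h - y1)) = s * s" .
      have "- ((r*y1 - r/h) / s) = (- (r*y1 - r/h)) / s" by (rule minus_divide_left)
      also have "- (r*y1 - r/h) = r * (1/h - y1)" by (simp add: algebra_simps)
      finally have "- ((r*y1 - r/h) / s) = (r * (1/h - y1)) / s" .
      also have "\<dots> = 1/a" unfolding a_def using m s r0 y1pos by (simp add: field_simps)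
      finally show ?thesis .
    qed
    have "hyp_area (orthoscheme r h) = ennreal (arctan a - 0) + ennreal (0 - arctan ((r*y1 - r/h) / s))"
      unfolding area P1[OF L1] P2 a_def ..
    also have "\<dots> = ennreal (arctan a + arctan (1/a))"
      using a0 inv by (simp add: arctan_minus[symmetric] ennreal_plus[symmetric] del: ennreal_plus)
    also have "\<dots> = ennreal (pi/2)" by (simp only: arctan_sum_inv[OF a0])
    finally show ?thesis .
  qed
qed



lemma arctan_diff:
  fixes x y :: real
  assumes "0 \<le> x" "0 \<le> y"
  shows "arctan x - arctan y = arctan ((x - y) / (1 + x * y))"
proof -
  define d where "d = arctan x - arctan y"
  have bx: "0 \<le> arctan x" "arctan x < pi/2" using assms arctan_ubound by auto
  have by': "0 \<le> arctan y" "arctan y < pi/2" using assms arctan_ubound by auto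
  have d1: "- (pi/2) < d" "d < pi/2" unfolding d_def using bx by' by linarith+
  have cd: "cos d \<noteq> 0" using cos_gt_zero_pi[OF d1] by simp
  have "tan d = (tan (arctan x) - tan (arctan y)) / (1 + tan (arctan x) * tan (arctan y))"
    unfolding d_def by (rule tan_diff) (use cos_arctan_not_zero cd[unfolded d_def] in auto)
  then have "tan d = (x - y) / (1 + x * y)" by (simp add: tan_arctan)
  then have "arctan ((x - y) / (1 + x * y)) = d" using arctan_tan[OF d1] by simp
  then show ?thesis unfolding d_def by simp
qed

lemma div_aux: "(t::real) > 0 \<Longrightarrow> h > 0 \<Longrightarrow> C > 0 \<Longrightarrow> A / (t * h) / (C / (t\<^sup>2 * h)) = A * t / C"
  by (simp add: field_simps power2_eq_square)

lemma cross_aux: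
  fixes r t h s C :: real
  assumes "C > 0" "h > 0" "r > 0" "t * (1 - h) * h < s * C"
  shows "r * t * (1 - h) / C < r * s / h"
proof -
  have "r * (t * (1 - h) * h) < r * (s * C)" using assms by (intro mult_strict_left_mono) auto
  then have "(r * t * (1 - h)) * h < (r * s) * C" by (simp add: mult_ac)
  then show ?thesis using assms by (simp add: divide_less_eq less_divide_eq mult_ac)
qed

lemma vangle:
  fixes r :: real
  assumes "0 < r" "r < 1"
  shows "vertex_angle (r,0) (0,0) (0,1) = arccos r"
proof -
  define D where "D = 1 - r\<^sup>2"
  have D: "D > 0" unfolding D_def using assms by (simp add: power_less_one_iff)
  have n: "(norm (r, 0::real))\<^sup>2 = r\<^sup>2" by (simp add: norm_Pair)
  have m1: "klein_metric (r,0) (-r, 0) (-r, 1) = r\<^sup>2 / D\<^sup>2"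
    unfolding klein_metric_def n D_def[symmetric] using D
    by (simp add: inner_Pair field_simps power2_eq_square, (simp add: D_def algebra_simps power2_eq_square)?)
  have m2: "klein_metric (r,0) (-r, 0) (-r, 0) = r\<^sup>2 / D\<^sup>2"
    unfolding klein_metric_def n D_def[symmetric] using D
    by (simp add: inner_Pair field_simps power2_eq_square, (simp add: D_def algebra_simps power2_eq_square)?)
  have m3: "klein_metric (r,0) (-r, 1) (-r, 1) = 1 / D\<^sup>2"
    unfolding klein_metric_def n D_def[symmetric] using D
    by (simp add: inner_Pair field_simps power2_eq_square, (simp add: D_def algebra_simps power2_eq_square)?)
  have sq: "sqrt (r\<^sup>2 / D\<^sup>2 * (1 / D\<^sup>2)) = r / D\<^sup>2"
  proof -
    have "r\<^sup>2 / D\<^sup>2 * (1 / D\<^sup>2) = (r / D\<^sup>2)\<^sup>2" by (simp add: power2_eq_square)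
    then show ?thesis using assms D by simp
  qed
  have "vertex_angle (r,0) (0,0) (0,1) = arccos (klein_metric (r,0) (-r, 0) (-r, 1) / sqrt (klein_metric (r,0) (-r, 0) (-r, 0) * klein_metric (r,0) (-r, 1) (-r, 1)))"
    unfolding vertex_angle_def klein_angle_def by simp
  also have "\<dots> = arccos r" unfolding m1 m2 m3 sq using D assms by (simp add: power2_eq_square)
  finally show ?thesis .
qed

lemma ineqAp:
  fixes r h :: real
  assumes r: "0 < r" "r < 1" and h: "0 < h" "h < 1"
  shows "arctan ((r*h - r/h) / sqrt (1 - h\<^sup>2 - (r - r/h*h)\<^sup>2)) - arctan ((r*0 - r/h) / sqrt (1 - 0\<^sup>2 - (r - r/h*0)\<^sup>2))
     < arctan (r / (1 * sqrt (1 - r\<^sup>2)))"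
proof -
  have r2: "0 < 1 - r\<^sup>2" using r by (simp add: power_less_one_iff)
  define t where "t = sqrt (1 - r\<^sup>2)"
  define s where "s = sqrt (1 - h\<^sup>2)"
  have t: "0 < t" "t < 1" "t * t = 1 - r\<^sup>2" unfolding t_def using r r2 by (auto simp: power_less_one_iff abs_of_pos)
  have h2: "0 < 1 - h\<^sup>2" using h by (simp add: power_less_one_iff)
  have s: "0 < s" "s * s = 1 - h\<^sup>2" unfolding s_def using h h2 by (auto simp: power_less_one_iff abs_of_pos)
  define a0 where "a0 = r / t"
  define X where "X = a0 / h"
  define B where "B = r * s / h"
  have a0: "a0 > 0" unfolding a0_def using r t by simp
  have X: "X > 0" unfolding X_def using a0 h by simp
  have B: "B > 0" unfolding B_def using r s h by simp
  have e1: "(r*h - r/h) / sqrt (1 - h\<^sup>2 - (r - r/h*h)\<^sup>2) = - B"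
  proof -
    have "r - r/h*h = 0" using h by simp
    then have sq: "sqrt (1 - h\<^sup>2 - (r - r/h*h)\<^sup>2) = s" unfolding s_def by simp
    have num: "(r*h - r/h) = - (r * (s * s) / h)" unfolding s(2) using h by (simp add: field_simps power2_eq_square)
    have "(r*h - r/h) / sqrt (1 - h\<^sup>2 - (r - r/h*h)\<^sup>2) = (- (r * (s * s) / h)) / s" unfolding sq num ..
    also have "\<dots> = - (r * s / h)" using s(1) h by (simp add: field_simps)
    finally show ?thesis unfolding B_def .
  qed
  have e2: "(r*0 - r/h) / sqrt (1 - 0\<^sup>2 - (r - r/h*0)\<^sup>2) = - X"
    unfolding X_def a0_def t_def using r2 by (simp add: abs_of_pos)
  have e3: "r / (1 * sqrt (1 - r\<^sup>2)) = a0" unfolding a0_def t_def by simp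
  have "arctan X - arctan a0 = arctan ((X - a0) / (1 + X * a0))"
    using X a0 by (intro arctan_diff) auto
  also have "\<dots> < arctan B"
  proof -
    have q: "(X - a0) / (1 + X * a0) = r * t * (1 - h) / (h * t\<^sup>2 + r\<^sup>2)"
    proof -
      have n1: "X - a0 = r * (1 - h) / (t * h)" unfolding X_def a0_def using h t(1) by (simp add: field_simps)
      have n2: "1 + X * a0 = (h * t\<^sup>2 + r\<^sup>2) / (t\<^sup>2 * h)" unfolding X_def a0_def using h t(1) by (simp add: field_simps power2_eq_square)
      have C: "h * t\<^sup>2 + r\<^sup>2 > 0" using h r t by (simp add: add_pos_pos)
      have "r * (1 - h) / (t * h) / ((h * t\<^sup>2 + r\<^sup>2) / (t\<^sup>2 * h)) = r * (1 - h) * t / (h * t\<^sup>2 + r\<^sup>2)"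
        using div_aux[OF t(1) h(1) C] .
      then show ?thesis unfolding n1 n2 by (simp add: mult_ac)
    qed
    have p1: "1 - h < s"
    proof -
      have "(1 - h)\<^sup>2 < s\<^sup>2" unfolding power2_eq_square s(2) using h by (simp add: algebra_simps)
      then show ?thesis using s h by (smt (verit) power_mono)
    qed
    have p2: "t * h \<le> h * t\<^sup>2 + r\<^sup>2"
    proof -
      have "r\<^sup>2 = 1 - t\<^sup>2" using t(3) by (simp add: power2_eq_square)
      moreover have "0 \<le> (1 - t) * (1 + t - h * t)" using t h
        by (intro mult_nonneg_nonneg) (auto simp: algebra_simps mult_le_cancel_right1 intro: order.trans[of _ t])
      ultimately show ?thesis by (simp add: algebra_simps power2_eq_square)
    qed
    have pos: "h * t\<^sup>2 + r\<^sup>2 > 0" using h r t by (simp add: add_pos_pos)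
    have "t * (1 - h) * h < s * (t * h)"
      using p1 t h by (simp add: mult.commute mult.left_commute)
    also have "\<dots> \<le> s * (h * t\<^sup>2 + r\<^sup>2)" using p2 s by (intro mult_left_mono) auto
    finally have "t * (1 - h) * h < s * (h * t\<^sup>2 + r\<^sup>2)" .
    then have "r * t * (1 - h) / (h * t\<^sup>2 + r\<^sup>2) < r * s / h"
      using cross_aux[OF pos h(1) r(1)] by blast
    then show ?thesis unfolding q B_def arctan_less_iff .
  qed
  finally have "arctan X - arctan B < arctan a0" by simp
  then show ?thesis unfolding e1 e2 e3 arctan_minus by simp
qed



lemma sub1:
  assumes "0 < h" "h < 1"
  shows "Reg r h \<subseteq> Reg r 1"
proof
  fix z assume z: "z \<in> Reg r h"
  then have "0 \<le> snd z" "fst z / r + snd z / h \<le> 1" unfolding Reg_def by auto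
  moreover have "snd z \<le> snd z / h"
  proof -
    have "h * snd z \<le> 1 * snd z" using \<open>0 \<le> snd z\<close> assms by (intro mult_right_mono) auto
    then show ?thesis using assms by (simp add: le_divide_eq mult.commute)
  qed
  ultimately have "fst z / r + snd z / 1 \<le> 1" by simp
  then show "z \<in> Reg r 1" using z unfolding Reg_def by auto
qed

lemma hstar:
  fixes r :: real
  assumes "1 < r"
  defines "hs \<equiv> r / sqrt (r\<^sup>2 - 1)"
  shows "hs > 1" "1 / hs\<^sup>2 = 1 - 1/r\<^sup>2"
    "\<And>h. h \<le> hs \<Longrightarrow> h > 0 \<Longrightarrow> h\<^sup>2 * (1 - 1/r\<^sup>2) \<le> 1"
proof -
  have p: "r\<^sup>2 - 1 > 0" using assms by (simp add: one_less_power)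
  have sq: "(sqrt (r\<^sup>2 - 1))\<^sup>2 = r\<^sup>2 - 1" using p by simp
  have hs2: "hs\<^sup>2 = r\<^sup>2 / (r\<^sup>2 - 1)" unfolding hs_def by (simp add: power_divide sq)
  have "r\<^sup>2 - 1 < r\<^sup>2" by simp
  then have "1 < r\<^sup>2 / (r\<^sup>2 - 1)" using p by (simp add: field_simps)
  then have "1 < hs\<^sup>2" using hs2 by simp
  moreover have "hs > 0" unfolding hs_def using assms p by simp
  ultimately show "hs > 1" by (smt (verit) one_less_power power2_eq_square mult_le_one)
  show "1 / hs\<^sup>2 = 1 - 1/r\<^sup>2" unfolding hs2 using p assms by (simp add: field_simps)
  fix h :: real assume h: "h \<le> hs" "h > 0"
  have "h\<^sup>2 \<le> hs\<^sup>2" using h by (intro power_mono) auto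
  then have "h\<^sup>2 * (r\<^sup>2 - 1) \<le> r\<^sup>2" using p unfolding hs2 by (simp add: field_simps)
  then show "h\<^sup>2 * (1 - 1/r\<^sup>2) \<le> 1" using assms by (simp add: field_simps)
qed

lemma sub2:
  fixes r h :: real
  assumes r: "1 < r"
  defines "hs \<equiv> r / sqrt (r\<^sup>2 - 1)"
  assumes h: "hs < h"
  shows "Reg r h \<subseteq> Reg r hs"
proof
  have hs1: "hs > 1" and hsq: "1 / hs\<^sup>2 = 1 - 1/r\<^sup>2" using hstar[OF r] unfolding hs_def by auto
  have h1: "h > 1" using hs1 h by simp
  fix z assume z: "z \<in> Reg r h"
  then have z1: "0 \<le> fst z" "0 \<le> snd z" "fst z * r \<le> 1" "snd z * h \<le> 1" using r h1 unfolding Reg_def by auto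
  have a: "fst z / r \<le> 1/r\<^sup>2" using z1 r by (simp add: field_simps power2_eq_square)
  have "snd z * hs \<le> snd z * h" using z1 h by (intro mult_left_mono) auto
  then have b0: "snd z * hs \<le> 1" using z1 by simp
  then have "snd z / hs \<le> 1 / hs\<^sup>2" using hs1 by (simp add: field_simps power2_eq_square)
  then have "fst z / r + snd z / hs \<le> 1" using a hsq by simp
  then show "z \<in> Reg r hs" using z b0 unfolding Reg_def by auto
qed

theorem theorem2:
  fixes r :: real
  assumes r0: "r > 0"
  defines "A \<equiv> (\<lambda>h. hyp_area (orthoscheme r h))"
  shows "(r < 1 \<longrightarrow>
            (\<forall>h>0. A h \<le> A 1) \<and> (\<forall>h>0. A h = A 1 \<longrightarrow> h = 1) \<and>
            A 1 = ennreal (pi/2 - vertex_angle (r,0) (0,0) (0,1)))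
       \<and> (r = 1 \<longrightarrow>
            (\<forall>h>0. A h \<le> ennreal (pi/2)) \<and> (\<forall>h\<ge>1. A h = ennreal (pi/2)))
       \<and> (r > 1 \<longrightarrow>
            (\<forall>h>0. A h \<le> ennreal (pi/2)) \<and>
            (\<forall>h. 1 \<le> h \<and> h \<le> r / sqrt (r\<^sup>2 - 1) \<longrightarrow> A h = ennreal (pi/2)))"
proof (intro conjI impI)
  assume r1: "r < 1"
  define v where "v = arctan (r / (1 * sqrt (1 - r\<^sup>2)))"
  have r2: "0 < 1 - r\<^sup>2" using r0 r1 by (simp add: power_less_one_iff)
  have vpos: "v > 0" unfolding v_def using r0 r2 by simp
  have A1: "A 1 = ennreal v" unfolding A_def v_def using areaA_lt[OF r0 r1, of 1] by simp
  have lt: "A h < A 1" if "h > 0" "h \<noteq> 1" for h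
  proof (cases "h < 1")
    case True
    have "A h = ennreal (arctan ((r*h - r/h) / sqrt (1 - h\<^sup>2 - (r - r/h*h)\<^sup>2)) - arctan ((r*0 - r/h) / sqrt (1 - 0\<^sup>2 - (r - r/h*0)\<^sup>2)))"
      unfolding A_def by (rule areaAp[OF r0 r1 that(1) True])
    also have "\<dots> < ennreal v" unfolding v_def
      using ineqAp[OF r0 r1 that(1) True] vpos[unfolded v_def] by (intro ennreal_lessI) auto
    finally show ?thesis unfolding A1 .
  next
    case False
    then have h1: "h > 1" using that by simp
    have "A h = ennreal (arctan (r / (h * sqrt (1 - r\<^sup>2))))" unfolding A_def using areaA_lt[OF r0 r1] h1 by simp
    also have "\<dots> < ennreal v" unfolding v_def
    proof (intro ennreal_lessI)
      show "0 < arctan (r / (1 * sqrt (1 - r\<^sup>2)))" using vpos unfolding v_def .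
      have "r / (h * sqrt (1 - r\<^sup>2)) < r / (1 * sqrt (1 - r\<^sup>2))"
        using h1 r0 r2 by (intro divide_strict_left_mono) auto
      then show "arctan (r / (h * sqrt (1 - r\<^sup>2))) < arctan (r / (1 * sqrt (1 - r\<^sup>2)))" by (simp add: arctan_less_iff)
    qed
    finally show ?thesis unfolding A1 .
  qed
  show "\<forall>h>0. A h \<le> A 1"
  proof (intro allI impI)
    fix h :: real assume "h > 0"
    then show "A h \<le> A 1" using lt[of h] by (cases "h = 1") auto
  qed
  show "\<forall>h>0. A h = A 1 \<longrightarrow> h = 1" using lt by fastforce
  have "pi/2 - vertex_angle (r,0) (0,0) (0,1) = v"
    unfolding vangle[OF r0 r1] v_def using arccos_arctan[of r] r0 r1 by simp
  then show "A 1 = ennreal (pi/2 - vertex_angle (r,0) (0,0) (0,1))" using A1 by simp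
next
  assume r1: "r = 1"
  have eq: "\<forall>h\<ge>1. A h = ennreal (pi/2)" unfolding A_def r1 using areaA_eq by auto
  then show "\<forall>h\<ge>1. A h = ennreal (pi/2)" .
  show "\<forall>h>0. A h \<le> ennreal (pi/2)"
  proof (intro allI impI)
    fix h :: real assume h: "h > 0"
    show "A h \<le> ennreal (pi/2)"
    proof (cases "h < 1")
      case True
      have "A h \<le> A 1" unfolding A_def using hyp_area_mono[OF r0 h _ sub1[OF h True]] by simp
      then show ?thesis using eq by simp
    next
      case False then show ?thesis using eq by simp
    qed
  qed
next
  assume r1: "r > 1"
  define hs where "hs = r / sqrt (r\<^sup>2 - 1)"
  have hs1: "hs > 1" unfolding hs_def using hstar[OF r1] by simp
  have eq: "A h = ennreal (pi/2)" if "1 \<le> h" "h \<le> hs" for h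
    unfolding A_def
    by (rule areaB[OF r1 that(1)]) (use hstar(3)[OF r1, of h] that hs_def in auto)
  then show "\<forall>h. 1 \<le> h \<and> h \<le> r / sqrt (r\<^sup>2 - 1) \<longrightarrow> A h = ennreal (pi/2)" unfolding hs_def by auto
  show "\<forall>h>0. A h \<le> ennreal (pi/2)"
  proof (intro allI impI)
    fix h :: real assume h: "h > 0"
    show "A h \<le> ennreal (pi/2)"
    proof (cases "h < 1")
      case True
      have "A h \<le> A 1" unfolding A_def using hyp_area_mono[OF r0 h _ sub1[OF h True]] by simp
      then show ?thesis using eq[of 1] hs1 by simp
    next
      case False
      show ?thesis
      proof (cases "h \<le> hs")
        case True then show ?thesis using eq False by simp
      next
        case False
        then have "hs < h" by simp
        then have "A h \<le> A hs" unfolding A_def using hyp_area_mono[OF r0 h _ sub2[OF r1 \<open>hs < h\<close>[unfolded hs_def]]] hs1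
          unfolding hs_def by simp
        then show ?thesis using eq[of hs] hs1 by simp
      qed
    qed
  qed
qed


end
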